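(* For any $\zeta\ge1$ there exists an $O(\zeta)$-round deterministic $\mathsf{CONGEST}$ algorithm that lets each vertex $u$ of $G$ compute $f_u^\ast(d)$ for all $d\in[\zeta]=\{1,\dots,\zeta\}$.
   Context: $G=(V,E)$ is an unweighted directed graph with $n=|V|$, also the communication network (communication over edges in both directions). $\mathsf{CONGEST}$: synchronous rounds, each vertex may send an $O(\log n)$-bit message to each neighbour per round, unique identifiers, unlimited local computation. $P=(s=v_0,v_1,\dots,v_{h_{st}}=t)$ is a given shortest $s$-$t$ path; the endpoints of each edge of $P$ know it belongs to $P$ and each $v_i$ knows its index $i$. For a vertex $u$ and integer $d\ge 0$, $f_u^\ast(d)$ is the largest index $j$ such that there exists a path from $u$ to $v_j$ of length exactly $d$ avoiding all edges of $P$; if no such $j$ exists, $f_u^\ast(d)=-\infty$. *)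

theory Defs
  imports Main
begin

text \<open>Graphs: vertices are natural numbers (= unique identifiers), a directed graph is
  a vertex set V and an edge set E with E \<subseteq> V \<times> V. A given path P is a list of vertices.\<close>

definition path_edges :: "nat list \<Rightarrow> (nat \<times> nat) set" where
  "path_edges ps = {(ps ! i, ps ! Suc i) | i. Suc i < length ps}"

text \<open>A walk (sequence of vertices, each consecutive pair an edge of E not in F);
  its length is the number of edges, i.e. length xs - 1.\<close>
definition walk_avoid :: "(nat \<times> nat) set \<Rightarrow> (nat \<times> nat) set \<Rightarrow> nat list \<Rightarrow> bool" where
  "walk_avoid E F xs \<longleftrightarrow> xs \<noteq> [] \<and> (\<forall>i. Suc i < length xs \<longrightarrow> (xs ! i, xs ! Suc i) \<in> E - F)"

definition shortest_path :: "nat set \<Rightarrow> (nat \<times> nat) set \<Rightarrow> nat list \<Rightarrow> bool" where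
  "shortest_path V E ps \<longleftrightarrow> ps \<noteq> [] \<and> set ps \<subseteq> V \<and> distinct ps \<and> walk_avoid E {} ps \<and>
     (\<forall>xs. walk_avoid E {} xs \<and> hd xs = hd ps \<and> last xs = last ps \<longrightarrow> length ps \<le> length xs)"

text \<open>f*_u(d): the largest index j such that some walk of length exactly d from u to v_j
  avoids all edges of P; None encodes -infinity.\<close>
definition fstar :: "(nat \<times> nat) set \<Rightarrow> nat list \<Rightarrow> nat \<Rightarrow> nat \<Rightarrow> nat option" where
  "fstar E ps u d =
    (let Q = (\<lambda>j. j < length ps \<and> (\<exists>xs. walk_avoid E (path_edges ps) xs \<and> length xs = d + 1
                    \<and> hd xs = u \<and> last xs = ps ! j))
     in if \<exists>j. Q j then Some (GREATEST j. Q j) else None)"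

definition nbrs :: "(nat \<times> nat) set \<Rightarrow> nat \<Rightarrow> nat set" where
  "nbrs E u = {w. (u, w) \<in> E \<or> (w, u) \<in> E} - {u}"

record local_input =
  lid :: nat
  out_nbrs :: "nat set"
  in_nbrs :: "nat set"
  P_out :: "nat set"
  P_in :: "nat set"
  P_index :: "nat option"

definition local_of :: "(nat \<times> nat) set \<Rightarrow> nat list \<Rightarrow> nat \<Rightarrow> local_input" where
  "local_of E ps u = \<lparr> lid = u,
     out_nbrs = {w. (u, w) \<in> E}, in_nbrs = {w. (w, u) \<in> E},
     P_out = {w. (u, w) \<in> path_edges ps}, P_in = {w. (w, u) \<in> path_edges ps},
     P_index = (if u \<in> set ps then Some (THE j. j < length ps \<and> ps ! j = u) else None) \<rparr>"

text \<open>Local states are natural numbers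
  (any finite information can be encoded; local computation is unrestricted).
  send st w: message (a natural number, or none) sent to neighbour w;
  trans st rcv: new state given the messages received from each neighbour;
  result st d: the vertex's output value for argument d.\<close>
record algorithm =
  init :: "local_input \<Rightarrow> nat"
  send :: "nat \<Rightarrow> nat \<Rightarrow> nat option"
  trans :: "nat \<Rightarrow> (nat \<Rightarrow> nat option) \<Rightarrow> nat"
  result :: "nat \<Rightarrow> nat \<Rightarrow> nat option"

fun run :: "algorithm \<Rightarrow> (nat \<times> nat) set \<Rightarrow> nat list \<Rightarrow> nat \<Rightarrow> nat \<Rightarrow> nat" where
  "run A E ps 0 u = init A (local_of E ps u)"
| "run A E ps (Suc r) u =
     trans A (run A E ps r u)
       (\<lambda>w. if w \<in> nbrs E u then send A (run A E ps r w) u else None)"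

text \<open>CONGEST bandwidth: during the first R rounds every message is a number below
  (n+1)^B, i.e. has O(log n) bits.\<close>
definition congest_bounded :: "algorithm \<Rightarrow> nat set \<Rightarrow> (nat \<times> nat) set \<Rightarrow> nat list \<Rightarrow> nat \<Rightarrow> nat \<Rightarrow> bool" where
  "congest_bounded A V E ps R B \<longleftrightarrow>
     (\<forall>r < R. \<forall>u \<in> V. \<forall>w \<in> nbrs E u. \<forall>m.
        send A (run A E ps r u) w = Some m \<longrightarrow> m < (card V + 1) ^ B)"

end

theory Submission
  imports Defs "HOL-Library.Countable"
begin

type_synonym st = "nat option list \<times> nat list \<times> bool"

definition dec :: "nat \<Rightarrow> st" where "dec n = from_nat n"
definition enc :: "st \<Rightarrow> nat" where "enc s = to_nat s"
lemma dec_enc[simp]: "dec (enc s) = s" by (simp add: dec_def enc_def)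

definition newval :: "nat option \<Rightarrow> bool \<Rightarrow> (nat \<Rightarrow> nat option) \<Rightarrow> nat option" where
 "newval cur sl rcv = (let M = {m. \<exists>w. rcv w = Some m} \<union> (if sl then set_option cur else {})
    in if M = {} then None else Some (Max M))"

definition Alg :: algorithm where
"Alg = \<lparr> init = \<lambda>li. enc ([P_index li], sorted_list_of_set {w \<in> in_nbrs li. w \<notin> P_in li},
                          lid li \<in> out_nbrs li \<and> lid li \<notin> P_out li),
   send = \<lambda>s w. (case dec s of (h, tg, sl) \<Rightarrow> if w \<in> set tg then last h else None),
   trans = \<lambda>s rcv. (case dec s of (h, tg, sl) \<Rightarrow> enc (h @ [newval (last h) sl rcv], tg, sl)),
   result = \<lambda>s d. (case dec s of (h, tg, sl) \<Rightarrow> if d < length h then h ! d else None) \<rparr>"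

definition Qs :: "(nat \<times> nat) set \<Rightarrow> nat list \<Rightarrow> nat \<Rightarrow> nat \<Rightarrow> nat set" where
  "Qs E ps u d = {j. j < length ps \<and> (\<exists>xs. walk_avoid E (path_edges ps) xs \<and> length xs = d + 1
                    \<and> hd xs = u \<and> last xs = ps ! j)}"

lemma Qs_bound: "Qs E ps u d \<subseteq> {..<length ps}"
  by (auto simp: Qs_def)

lemma Qs_fin: "finite (Qs E ps u d)"
  by (rule finite_subset[OF Qs_bound]) simp

lemma fstar_Qs: "fstar E ps u d = (if Qs E ps u d = {} then None else Some (Max (Qs E ps u d)))"
proof -
  define Q where "Q = (\<lambda>j. j < length ps \<and> (\<exists>xs. walk_avoid E (path_edges ps) xs \<and> length xs = d + 1
                    \<and> hd xs = u \<and> last xs = ps ! j))"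
  have QQ: "Qs E ps u d = {j. Q j}" by (simp add: Qs_def Q_def)
  have f: "fstar E ps u d = (if \<exists>j. Q j then Some (GREATEST j. Q j) else None)"
    unfolding fstar_def Let_def Q_def by (rule refl)
  show ?thesis
  proof (cases "\<exists>j. Q j")
    case True
    have ne: "{j. Q j} \<noteq> {}" using True by auto
    have fin: "finite {j. Q j}" using Qs_fin[of E ps u d] unfolding QQ .
    have "(GREATEST j. Q j) = Max {j. Q j}"
    proof (rule Greatest_equality)
      show "Q (Max {j. Q j})" using Max_in[OF fin ne] by simp
      fix y assume "Q y" then show "y \<le> Max {j. Q j}" using Max_ge[OF fin] by simp
    qed
    then show ?thesis using f True QQ ne by simp
  next
    case False
    then show ?thesis using f QQ by simp
  qed
qed

lemma Qs_0: "Qs E ps u 0 = {j. j < length ps \<and> ps ! j = u}"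
proof -
  have "(\<exists>xs. walk_avoid E (path_edges ps) xs \<and> length xs = 1 \<and> hd xs = u \<and> last xs = v) \<longleftrightarrow> v = u" for v
  proof
    assume "\<exists>xs. walk_avoid E (path_edges ps) xs \<and> length xs = 1 \<and> hd xs = u \<and> last xs = v"
    then obtain xs where "length xs = 1" "hd xs = u" "last xs = v" by blast
    then show "v = u" by (cases xs) auto
  next
    assume "v = u"
    then show "\<exists>xs. walk_avoid E (path_edges ps) xs \<and> length xs = 1 \<and> hd xs = u \<and> last xs = v"
      by (intro exI[of _ "[u]"]) (auto simp: walk_avoid_def)
  qed
  then show ?thesis by (auto simp: Qs_def)
qed

lemma fstar_0:
  assumes "distinct ps"
  shows "fstar E ps u 0 = P_index (local_of E ps u)"
proof (cases "u \<in> set ps")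
  case True
  then obtain i where i: "i < length ps" "ps ! i = u" by (auto simp: in_set_conv_nth)
  have uniq: "j < length ps \<and> ps ! j = u \<longleftrightarrow> j = i" for j
    using i assms nth_eq_iff_index_eq by blast
  have "Qs E ps u 0 = {i}" using uniq by (auto simp: Qs_0)
  moreover have "(THE j. j < length ps \<and> ps ! j = u) = i" using uniq by auto
  ultimately show ?thesis using True by (simp add: fstar_Qs local_of_def)
next
  case False
  have "Qs E ps u 0 = {}" using False by (auto simp: Qs_0)
  then show ?thesis using False by (simp add: fstar_Qs local_of_def)
qed

lemma walk_avoid_Cons:
  assumes "ys \<noteq> []"
  shows "walk_avoid E F (u # ys) \<longleftrightarrow> (u, hd ys) \<in> E - F \<and> walk_avoid E F ys"
proof
  assume a: "walk_avoid E F (u # ys)"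
  have "(u, hd ys) \<in> E - F" using a assms unfolding walk_avoid_def
    by (cases ys) auto
  moreover have "walk_avoid E F ys" unfolding walk_avoid_def
  proof (intro conjI allI impI)
    show "ys \<noteq> []" by fact
    fix i assume "Suc i < length ys"
    then have "(( u # ys) ! Suc i, (u # ys) ! Suc (Suc i)) \<in> E - F" using a unfolding walk_avoid_def
      by (metis length_Cons Suc_less_eq)
    then show "(ys ! i, ys ! Suc i) \<in> E - F" by simp
  qed
  ultimately show "(u, hd ys) \<in> E - F \<and> walk_avoid E F ys" by blast
next
  assume a: "(u, hd ys) \<in> E - F \<and> walk_avoid E F ys"
  show "walk_avoid E F (u # ys)" unfolding walk_avoid_def
  proof (intro conjI allI impI)
    show "u # ys \<noteq> []" by simp
    fix i assume i: "Suc i < length (u # ys)"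
    show "((u # ys) ! i, (u # ys) ! Suc i) \<in> E - F"
    proof (cases i)
      case 0
      then show ?thesis using a assms by (simp add: hd_conv_nth)
    next
      case (Suc k)
      then show ?thesis using a i unfolding walk_avoid_def by simp
    qed
  qed
qed

lemma Qs_Suc: "Qs E ps u (Suc d) = (\<Union>w\<in>{w. (u,w) \<in> E - path_edges ps}. Qs E ps w d)"
proof
  show "Qs E ps u (Suc d) \<subseteq> (\<Union>w\<in>{w. (u,w) \<in> E - path_edges ps}. Qs E ps w d)"
  proof
    fix j assume "j \<in> Qs E ps u (Suc d)"
    then obtain xs where j: "j < length ps" "walk_avoid E (path_edges ps) xs" "length xs = Suc d + 1"
      "hd xs = u" "last xs = ps ! j" by (auto simp: Qs_def)
    then obtain ys where xs0: "xs = u # ys" by (cases xs) auto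
    have xs: "xs = u # ys" "ys \<noteq> []" using xs0 j(3) by auto
    then have "(u, hd ys) \<in> E - path_edges ps" "walk_avoid E (path_edges ps) ys"
      using j walk_avoid_Cons by auto
    moreover have "j \<in> Qs E ps (hd ys) d" unfolding Qs_def
      using j xs calculation by auto
    ultimately show "j \<in> (\<Union>w\<in>{w. (u,w) \<in> E - path_edges ps}. Qs E ps w d)" by blast
  qed
next
  show "(\<Union>w\<in>{w. (u,w) \<in> E - path_edges ps}. Qs E ps w d) \<subseteq> Qs E ps u (Suc d)"
  proof
    fix j assume "j \<in> (\<Union>w\<in>{w. (u,w) \<in> E - path_edges ps}. Qs E ps w d)"
    then obtain w ys where w: "(u,w) \<in> E - path_edges ps" "j < length ps"
      "walk_avoid E (path_edges ps) ys" "length ys = d + 1" "hd ys = w" "last ys = ps ! j"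
      by (auto simp: Qs_def)
    then have ne: "ys \<noteq> []" by auto
    have "walk_avoid E (path_edges ps) (u # ys)" using walk_avoid_Cons[OF ne] w by auto
    then show "j \<in> Qs E ps u (Suc d)" unfolding Qs_def using w ne
      by (intro CollectI conjI exI[of _ "u # ys"]) auto
  qed
qed

lemma fstar_Suc:
  "fstar E ps u (Suc d) = (let M = {m. \<exists>w. (u,w) \<in> E - path_edges ps \<and> fstar E ps w d = Some m}
     in if M = {} then None else Some (Max M))"
proof -
  define W where "W = {w. (u,w) \<in> E - path_edges ps}"
  define U where "U = (\<Union>w\<in>W. Qs E ps w d)"
  define M where "M = {m. \<exists>w. (u,w) \<in> E - path_edges ps \<and> fstar E ps w d = Some m}"
  have M: "M = {Max (Qs E ps w d) | w. w \<in> W \<and> Qs E ps w d \<noteq> {}}"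
    unfolding M_def W_def by (auto simp: fstar_Qs split: if_splits)
  have U: "Qs E ps u (Suc d) = U" unfolding U_def W_def by (rule Qs_Suc)
  have Ub: "U \<subseteq> {..<length ps}" unfolding U_def using Qs_bound by blast
  then have finU: "finite U" by (rule finite_subset) simp
  have MU: "M \<subseteq> U"
  proof
    fix m assume "m \<in> M"
    then obtain w where "w \<in> W" "Qs E ps w d \<noteq> {}" "m = Max (Qs E ps w d)" unfolding M by blast
    then show "m \<in> U" unfolding U_def using Max_in[OF Qs_fin[of E ps w d]] by blast
  qed
  then have finM: "finite M" using finU by (rule finite_subset)
  have lhs: "fstar E ps u (Suc d) = (if U = {} then None else Some (Max U))"
    unfolding fstar_Qs[of E ps u "Suc d"] U ..
  have eq: "M = {} \<longleftrightarrow> U = {}" unfolding M U_def by auto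
  show ?thesis
  proof (cases "U = {}")
    case True
    then show ?thesis using eq lhs unfolding Let_def M_def[symmetric] by simp
  next
    case False
    then have Mne: "M \<noteq> {}" using eq by simp
    have "Max M = Max U"
    proof (rule antisym)
      show "Max M \<le> Max U" using MU Mne finU by (meson Max_mono)
    next
      obtain w where w: "w \<in> W" "Max U \<in> Qs E ps w d" using Max_in[OF finU False] unfolding U_def by blast
      then have "Max U \<le> Max (Qs E ps w d)" using Qs_fin by auto
      also have "Max (Qs E ps w d) \<in> M" unfolding M using w by blast
      then have "Max (Qs E ps w d) \<le> Max M" using finM by auto
      finally show "Max U \<le> Max M" .
    qed
    then show ?thesis using False Mne lhs unfolding Let_def M_def[symmetric] by simp
  qed
qed

definition T :: "(nat \<times> nat) set \<Rightarrow> nat list \<Rightarrow> nat \<Rightarrow> nat list" where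
  "T E ps u = sorted_list_of_set {w. (w,u) \<in> E \<and> (w,u) \<notin> path_edges ps}"

definition SL :: "(nat \<times> nat) set \<Rightarrow> nat list \<Rightarrow> nat \<Rightarrow> bool" where
  "SL E ps u = ((u,u) \<in> E \<and> (u,u) \<notin> path_edges ps)"

lemma inv:
  assumes "finite V" "E \<subseteq> V \<times> V" "distinct ps"
  shows "dec (run Alg E ps r u) = (map (fstar E ps u) [0..<Suc r], T E ps u, SL E ps u)"
proof (induction r arbitrary: u)
  case 0
  show ?case using fstar_0[OF assms(3)]
    by (simp add: Alg_def local_of_def T_def SL_def)
next
  case (Suc r)
  have setT: "set (T E ps w) = {x. (x,w) \<in> E \<and> (x,w) \<notin> path_edges ps}" for w
  proof -
    have "{x. (x,w) \<in> E \<and> (x,w) \<notin> path_edges ps} \<subseteq> V" using assms(2) by auto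
    then have "finite {x. (x,w) \<in> E \<and> (x,w) \<notin> path_edges ps}" using assms(1) by (rule finite_subset)
    then show ?thesis by (simp add: T_def)
  qed
  define rcv where "rcv = (\<lambda>w. if w \<in> nbrs E u then send Alg (run Alg E ps r w) u else None)"
  have rcv: "rcv w = (if w \<in> nbrs E u \<and> (u,w) \<in> E \<and> (u,w) \<notin> path_edges ps then fstar E ps w r else None)" for w
    unfolding rcv_def using Suc.IH[of w] by (simp add: Alg_def setT)
  have nv: "newval (fstar E ps u r) (SL E ps u) rcv = fstar E ps u (Suc r)"
  proof -
    have "{m. \<exists>w. rcv w = Some m} \<union> (if SL E ps u then set_option (fstar E ps u r) else {})
       = {m. \<exists>w. (u,w) \<in> E - path_edges ps \<and> fstar E ps w r = Some m}"
      unfolding rcv SL_def nbrs_def by (auto split: if_splits)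
    then show ?thesis unfolding newval_def fstar_Suc[of E ps u r] by (simp add: Let_def)
  qed
  have "run Alg E ps (Suc r) u = trans Alg (run Alg E ps r u) rcv" by (simp add: rcv_def)
  also have "\<dots> = enc (map (fstar E ps u) [0..<Suc r] @ [fstar E ps u (Suc r)], T E ps u, SL E ps u)"
    using Suc.IH[of u] nv by (simp add: Alg_def)
  finally show ?case by simp
qed

theorem lemma4p2:
  shows "\<forall>K::nat. \<exists>(c::nat) (B::nat). \<forall>\<zeta>::nat. \<zeta> \<ge> 1 \<longrightarrow> (\<exists>A::algorithm.
     \<forall>(V::nat set) (E::(nat \<times> nat) set) (ps::nat list).
       finite V \<and> V \<subseteq> {..< card V ^ K} \<and> E \<subseteq> V \<times> V \<and> shortest_path V E ps \<longrightarrow>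
       congest_bounded A V E ps (c * \<zeta>) B \<and>
       (\<forall>u \<in> V. \<forall>d \<in> {1..\<zeta>}. result A (run A E ps (c * \<zeta>) u) d = fstar E ps u d))"
proof (intro allI)
  fix K :: nat
  show "\<exists>(c::nat) (B::nat). \<forall>\<zeta>::nat. \<zeta> \<ge> 1 \<longrightarrow> (\<exists>A::algorithm.
     \<forall>(V::nat set) (E::(nat \<times> nat) set) (ps::nat list).
       finite V \<and> V \<subseteq> {..< card V ^ K} \<and> E \<subseteq> V \<times> V \<and> shortest_path V E ps \<longrightarrow>
       congest_bounded A V E ps (c * \<zeta>) B \<and>
       (\<forall>u \<in> V. \<forall>d \<in> {1..\<zeta>}. result A (run A E ps (c * \<zeta>) u) d = fstar E ps u d))"
  proof (intro exI[of _ 1] allI impI)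
  fix \<zeta> :: nat
  show "\<exists>A::algorithm.
     \<forall>(V::nat set) (E::(nat \<times> nat) set) (ps::nat list).
       finite V \<and> V \<subseteq> {..< card V ^ K} \<and> E \<subseteq> V \<times> V \<and> shortest_path V E ps \<longrightarrow>
       congest_bounded A V E ps (1 * \<zeta>) 1 \<and>
       (\<forall>u \<in> V. \<forall>d \<in> {1..\<zeta>}. result A (run A E ps (1 * \<zeta>) u) d = fstar E ps u d)"
  proof (intro exI[of _ Alg] allI impI conjI)
    fix V E ps
    assume a: "finite V \<and> V \<subseteq> {..< card V ^ K} \<and> E \<subseteq> V \<times> V \<and> shortest_path V E ps"
    then have fV: "finite V" and EV: "E \<subseteq> V \<times> V" and dps: "distinct ps" and sps: "set ps \<subseteq> V"
      by (auto simp: shortest_path_def)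
    have lenV: "length ps \<le> card V"
      using distinct_card[OF dps] card_mono[OF fV sps] by simp
    note I = inv[OF fV EV dps]
    show "congest_bounded Alg V E ps (1 * \<zeta>) 1"
      unfolding congest_bounded_def
    proof (intro allI impI ballI)
      fix r u w m
      assume "send Alg (run Alg E ps r u) w = Some m"
      then have "fstar E ps u r = Some m" using I[of r u] by (simp add: Alg_def split: if_splits)
      then have "Qs E ps u r \<noteq> {} \<and> m = Max (Qs E ps u r)" by (simp add: fstar_Qs split: if_splits)
      then have "m \<in> Qs E ps u r" using Max_in[OF Qs_fin[of E ps u r]] by simp
      then have "m < length ps" using Qs_bound[of E ps u r] by auto
      then show "m < (card V + 1) ^ 1" using lenV by simp
    qed
    show "\<forall>u \<in> V. \<forall>d \<in> {1..\<zeta>}. result Alg (run Alg E ps (1 * \<zeta>) u) d = fstar E ps u d"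
    proof (intro ballI)
      fix u d assume "d \<in> {1..\<zeta>}"
      then have "d < Suc \<zeta>" by auto
      then show "result Alg (run Alg E ps (1 * \<zeta>) u) d = fstar E ps u d"
        using I[of \<zeta> u] by (simp add: Alg_def nth_append del: upt_Suc)
    qed
  qed
  qed
qed

end
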